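(* Let $(X\cup Y,\mathbf{d})$ be a finite metric space, $\epsilon \in (0,\frac{1}{2})$ and $S \subseteq Y$. For each $x\in X$ let $N_x$ be an $\epsilon \cdot \mathbf{d}(x, S)$-net of $B_Y(\pi_S(x), \mathbf{d}(x,S)/\epsilon)$, and for $x\in X$, $y\in Y$ define $\widehat{\mathbf{d}}_S(x,y) = \min_{u\in N_x} \mathbf{d}(x,u) + \mathbf{d}(u,y)$. Then for all $x\in X$ and $y\in Y$, \[ \mathbf{d}(x,y) \le \widehat{\mathbf{d}}_S(x,y) \le (1+4\epsilon) \cdot \mathbf{d}(x,y) + 2 \epsilon \cdot \mathbf{d}(x,S). \]
   Context: For $S\subseteq X\cup Y$, $x$ and $r>0$, $B_S(x,r)=\{y\in S:\mathbf{d}(x,y)\le r\}$. $\pi_S(x)$ denotes a point of $S$ closest to $x$ and $\mathbf{d}(x,S)=\mathbf{d}(x,\pi_S(x))$. For $\rho>0$, a $\rho$-net of a set $B$ is a subset $N\subseteq B$ whose distinct points are pairwise at distance at least $\rho$ and such that every point of $B$ is within distance $\rho$ of some point of $N$. The net $N_x$ need not contain $\pi_S(x)$. *)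

theory Defs
  imports "HOL-Analysis.Analysis"
begin

definition ballS :: "'a::metric_space set \<Rightarrow> 'a \<Rightarrow> real \<Rightarrow> 'a set" where
  "ballS S x r = {y \<in> S. dist x y \<le> r}"

definition is_net :: "real \<Rightarrow> 'a::metric_space set \<Rightarrow> 'a set \<Rightarrow> bool" where
  "is_net rho B N \<longleftrightarrow> N \<subseteq> B \<and>
     (\<forall>u\<in>N. \<forall>v\<in>N. u \<noteq> v \<longrightarrow> dist u v \<ge> rho) \<and>
     (\<forall>b\<in>B. \<exists>u\<in>N. dist b u \<le> rho)"

definition is_closest_point :: "'a::metric_space set \<Rightarrow> 'a \<Rightarrow> 'a \<Rightarrow> bool" where
  "is_closest_point S x p \<longleftrightarrow> p \<in> S \<and> (\<forall>s\<in>S. dist x p \<le> dist x s)"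

definition dhat :: "('a::metric_space \<Rightarrow> 'a set) \<Rightarrow> 'a \<Rightarrow> 'a \<Rightarrow> real" where
  "dhat N x y = Min ((\<lambda>u. dist x u + dist u y) ` N x)"

end

theory Submission
  imports Defs
begin

lemma infdist_closest:
  assumes "is_closest_point S x p"
  shows "infdist x S = dist x p"
proof -
  have pS: "p \<in> S" and le: "\<forall>s\<in>S. dist x p \<le> dist x s"
    using assms unfolding is_closest_point_def by auto
  have "dist x p \<le> infdist x S"
    unfolding infdist_def using pS le by (auto intro!: cINF_greatest)
  moreover have "infdist x S \<le> dist x p" using infdist_le[OF pS] .
  ultimately show ?thesis by simp
qed

theorem lemma3p2:
  fixes X Y S :: "'a::metric_space set" and eps :: real
    and pi :: "'a \<Rightarrow> 'a" and N :: "'a \<Rightarrow> 'a set"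
  assumes "finite X" and "finite Y"
    and "0 < eps" and "eps < 1/2"
    and "S \<subseteq> Y" and "S \<noteq> {}"
    and "\<And>x. x \<in> X \<Longrightarrow> is_closest_point S x (pi x)"
    and "\<And>x. x \<in> X \<Longrightarrow>
           is_net (eps * infdist x S) (ballS Y (pi x) (infdist x S / eps)) (N x)"
  shows "\<forall>x\<in>X. \<forall>y\<in>Y. dist x y \<le> dhat N x y \<and>
           dhat N x y \<le> (1 + 4 * eps) * dist x y + 2 * eps * infdist x S"
proof (intro ballI)
  fix x y assume xX: "x \<in> X" and yY: "y \<in> Y"
  define D where "D = infdist x S"
  have cl: "is_closest_point S x (pi x)" using assms(7) xX .
  have D: "D = dist x (pi x)" unfolding D_def using infdist_closest[OF cl] .
  have D0: "0 \<le> D" using D by simp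
  have piY: "pi x \<in> Y" using cl assms(5) unfolding is_closest_point_def by auto
  have net: "is_net (eps * D) (ballS Y (pi x) (D / eps)) (N x)"
    using assms(8)[OF xX] unfolding D_def .
  have sub: "N x \<subseteq> Y" using net unfolding is_net_def ballS_def by auto
  have fin: "finite (N x)" using sub assms(2) finite_subset by blast
  have cover: "\<And>b. b \<in> ballS Y (pi x) (D / eps) \<Longrightarrow> \<exists>u\<in>N x. dist b u \<le> eps * D"
    using net unfolding is_net_def by auto
  have piB: "pi x \<in> ballS Y (pi x) (D / eps)"
    unfolding ballS_def using piY D0 assms(3) by auto
  then obtain u0 where u0: "u0 \<in> N x" "dist (pi x) u0 \<le> eps * D" using cover by blast
  have ne: "N x \<noteq> {}" using u0 by auto
  have upper: "\<And>u. u \<in> N x \<Longrightarrow> dhat N x y \<le> dist x u + dist u y"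
    unfolding dhat_def using fin by (auto intro: Min_le)
  have "dist x y \<le> dhat N x y"
    unfolding dhat_def using fin ne
    by (auto intro!: Min.boundedI dist_triangle)
  moreover have "dhat N x y \<le> (1 + 4 * eps) * dist x y + 2 * eps * D"
  proof (cases "dist (pi x) y \<le> D / eps")
    case True
    then have "y \<in> ballS Y (pi x) (D / eps)" unfolding ballS_def using yY by auto
    then obtain u where u: "u \<in> N x" "dist y u \<le> eps * D" using cover by blast
    have "dhat N x y \<le> dist x u + dist u y" using upper[OF u(1)] .
    also have "\<dots> \<le> dist x y + 2 * dist u y"
      using dist_triangle[of x u y] dist_commute[of u y] by linarith
    also have "\<dots> \<le> dist x y + 2 * eps * D" using u(2) dist_commute[of u y] by linarith
    also have "\<dots> \<le> (1 + 4 * eps) * dist x y + 2 * eps * D"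
      using assms(3) by (simp add: algebra_simps)
    finally show ?thesis .
  next
    case False
    have "dhat N x y \<le> dist x u0 + dist u0 y" using upper[OF u0(1)] .
    also have "\<dots> \<le> D + 2 * eps * D + dist (pi x) y"
      using dist_triangle[of x u0 "pi x"] dist_triangle[of u0 y "pi x"] u0(2) D
        dist_commute[of u0 "pi x"] by linarith
    also have "\<dots> \<le> 2 * D + 2 * eps * D + dist x y"
      using dist_triangle[of "pi x" y x] D dist_commute[of x "pi x"] by linarith
    also have "\<dots> \<le> (1 + 4 * eps) * dist x y + 2 * eps * D"
    proof -
      have "D / eps < dist (pi x) y" using False by simp
      also have "\<dots> \<le> D + dist x y"
        using dist_triangle[of "pi x" y x] D dist_commute[of x "pi x"] by linarith
      finally have "D < eps * (D + dist x y)" using assms(3) by (simp add: field_simps)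
      then have "2 * D \<le> 4 * eps * dist x y"
        using assms(3,4) D0 mult_left_mono[of eps "1/2" D] by (simp add: algebra_simps)
      then show ?thesis by (simp add: algebra_simps)
    qed
    finally show ?thesis .
  qed
  ultimately show "dist x y \<le> dhat N x y \<and>
           dhat N x y \<le> (1 + 4 * eps) * dist x y + 2 * eps * infdist x S"
    unfolding D_def by simp
qed

end
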